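(* Let $\{\mu_t\}_{t\in[0,T]}$ and $A_E$ be as in the definition of approximative solutions below. Then for all $t_1\le t_2$ in $A_E$, $$\int_{t_1}^{t_2}D[\mu_t]\,dt\le E[\mu_{t_1}]-E[\mu_{t_2}];$$ in particular $t\mapsto E[\mu_t]$ is non-increasing on $A_E$ (hence for a.a. $t$).
   Context: Setting: $T>0$, $\alpha\in[1,2]$, $d\ge1$, $\psi(s)=s^{-\alpha}$. $\Delta=\{(x,v,x',v'):x=x'\}$; $E[\mu_t]=\int|v|^2d\mu_t$; $D[\mu_t]=\int_{\mathbb{R}^{4d}\setminus\Delta}\frac{|v-v'|^2}{|x-x'|^\alpha}d[\mu_t\otimes\mu_t]$. Particle system: $\dot x_i=v_i$, $\dot v_i=\frac1N\sum_{j\ne i}\psi(|x_i-x_j|)(v_j-v_i)$ (unique smooth non-collisional global solutions for distinct initial positions). Atomic solution: $\mu^N_t=\frac1N\sum_i\delta_{x_i^N(t)}\otimes\delta_{v_i^N(t)}$, $\mu^N=\mu^N_t\otimes\lambda^1(t)$, where $\mu=\mu_t\otimes\lambda^1(t)$ means $\int g\,d\mu=\int_0^T\int g(t,\cdot)d\mu_t\,dt$. Approximative solutions: given compactly supported $\rho_0\in\mathcal{P}(\mathbb{R}^d)$ and $u_0\in L^\infty(\rho_0;\mathbb{R}^d)$, for each $N$ take initial data $(x_{i0}^N,v_{i0}^N)_{i=1}^N$ with pairwise distinct $x_{i0}^N$ such that $\frac1N\sum_i\delta_{x_{i0}^N}\rightharpoonup\rho_0$ and $\frac1N\sum_iv_{i0}^N\delta_{x_{i0}^N}\rightharpoonup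 u_0\rho_0$ narrowly, with all $\mu^N_t$ supported in $(T+1)B(M)\times B(M)$ for a fixed $M$; let $\mu^N$ be the associated atomic solutions, and pass to a subsequence (not relabeled) such that: $\mu^N\rightharpoonup\mu=\mu_t\otimes\lambda^1(t)$ narrowly; $[\mu^N_t\otimes\mu^N_t]\otimes\lambda^1(t)\rightharpoonup[\mu_t\otimes\mu_t]\otimes\lambda^1(t)$ narrowly; $\rho^N_t:=\int_{\mathbb{R}^d_v}d\mu^N_t\to\rho_t$ in $C([0,T];(\mathcal{M}_+(\mathbb{R}^d),d_{BL}))$; and $E[\mu^N_t]\to E[\mu_t]$ for all $t$ in a full-measure set $A_E\subset[0,T]$. The measures $\mu_t$ are supported in the closure of $(T+1)B(M)\times B(M)$. Here $B(r)$ is the open ball of radius $r$ at $0$ and $d_{BL}$ the bounded-Lipschitz distance. *)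

theory Defs
  imports "HOL-Probability.Probability"
begin

definition psi :: "real \<Rightarrow> real \<Rightarrow> real" where
  "psi \<alpha> s = s powr (- \<alpha>)"

definition empirical :: "nat \<Rightarrow> (nat \<Rightarrow> 'b::topological_space) \<Rightarrow> 'b measure" where
  "empirical N p = measure_of UNIV (sets borel)
      (\<lambda>A. (\<Sum>i<N. ennreal (indicator A (p i))) / of_nat N)"

definition energy :: "('a::real_normed_vector \<times> 'a) measure \<Rightarrow> real" where
  "energy \<mu> = (\<integral>z. (norm (snd z))\<^sup>2 \<partial>\<mu>)"

definition dissipation :: "real \<Rightarrow> ('a::real_normed_vector \<times> 'a) measure \<Rightarrow> ennreal" where
  "dissipation \<alpha> \<mu> = (\<integral>\<^sup>+ p. indicator {p. fst (fst p) \<noteq> fst (snd p)} p *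
      ennreal ((norm (snd (fst p) - snd (snd p)))\<^sup>2 / (dist (fst (fst p)) (fst (snd p))) powr \<alpha>)
      \<partial>(\<mu> \<Otimes>\<^sub>M \<mu>))"

definition BL1 :: "('a::metric_space \<Rightarrow> real) \<Rightarrow> bool" where
  "BL1 f \<longleftrightarrow> (\<forall>x. \<bar>f x\<bar> \<le> 1) \<and> (\<forall>x y. \<bar>f x - f y\<bar> \<le> dist x y)"

definition dBL :: "'a::metric_space measure \<Rightarrow> 'a measure \<Rightarrow> real" where
  "dBL \<mu> \<nu> = (SUP f \<in> Collect BL1. \<bar>(\<integral>x. f x \<partial>\<mu>) - (\<integral>x. f x \<partial>\<nu>)\<bar>)"

definition narrow_conv :: "(nat \<Rightarrow> 'b::topological_space measure) \<Rightarrow> 'b measure \<Rightarrow> bool" where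
  "narrow_conv M L \<longleftrightarrow> (\<forall>g::'b \<Rightarrow> real. continuous_on UNIV g \<and> bounded (range g) \<longrightarrow>
      (\<lambda>n. \<integral>z. g z \<partial>M n) \<longlonglongrightarrow> (\<integral>z. g z \<partial>L))"

text \<open>Narrow convergence on [0,T] x X of measures of the form mu_t (x) lambda^1(t), i.e.
  of the measures g |-> int_0^T int g(t,.) d mu_t dt.\<close>
definition narrow_conv_time ::
  "real \<Rightarrow> (nat \<Rightarrow> real \<Rightarrow> 'b::topological_space measure) \<Rightarrow> (real \<Rightarrow> 'b measure) \<Rightarrow> bool" where
  "narrow_conv_time T M L \<longleftrightarrow> (\<forall>g::real \<times> 'b \<Rightarrow> real.
      continuous_on ({0..T} \<times> UNIV) g \<and> bounded (g ` ({0..T} \<times> UNIV)) \<longrightarrow>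
      (\<lambda>n. LINT t:{0..T}|lborel. (\<integral>z. g (t, z) \<partial>M n t))
        \<longlonglongrightarrow> (LINT t:{0..T}|lborel. (\<integral>z. g (t, z) \<partial>L t)))"

end

theory Submission
  imports Defs
begin

lemma empirical_distr:
  fixes p :: "nat \<Rightarrow> 'b::topological_space"
  assumes N: "N > 0"
  shows "empirical N p = distr (measure_pmf (pmf_of_set {..<N})) borel p"
proof -
  have ne: "{..<N} \<noteq> {}" using N by auto
  have "empirical N p = measure_of UNIV (sets borel) (emeasure (distr (measure_pmf (pmf_of_set {..<N})) borel p))"
    unfolding empirical_def
  proof (rule measure_of_eq)
    show "sets borel \<subseteq> Pow UNIV" by auto
    fix A :: "'b set" assume "A \<in> sigma_sets UNIV (sets borel)"
    then have A: "A \<in> sets borel" by (metis sets.sigma_sets_eq sets_borel space_borel)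
    have "emeasure (distr (measure_pmf (pmf_of_set {..<N})) borel p) A
        = emeasure (measure_pmf (pmf_of_set {..<N})) (p -` A)"
      using A by (subst emeasure_distr) auto
    also have "\<dots> = ennreal (real (card ({..<N} \<inter> p -` A)) / real N)"
      using ne by (subst emeasure_pmf_of_set) auto
    also have "\<dots> = of_nat (card ({..<N} \<inter> p -` A)) / of_nat N"
      using N by (simp add: divide_ennreal[symmetric] ennreal_of_nat_eq_real_of_nat)
    also have "(\<Sum>i<N. ennreal (indicator A (p i))) = of_nat (card ({..<N} \<inter> p -` A))"
    proof -
      have "(\<Sum>i<N. ennreal (indicator A (p i))) = (\<Sum>i<N. ennreal (indicator (p -` A) i))"
        by (simp add: indicator_def)
      also have "\<dots> = ennreal (\<Sum>i<N. indicator (p -` A) i)" by simp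
      also have "(\<Sum>i<N. indicator (p -` A) i) = real (card ({..<N} \<inter> (p -` A)))"
        by (simp add: indicator_def sum.If_cases Int_def)
      finally show ?thesis by (simp add: ennreal_of_nat_eq_real_of_nat)
    qed
    ultimately show "(\<Sum>i<N. ennreal (indicator A (p i))) / of_nat N =
        emeasure (distr (measure_pmf (pmf_of_set {..<N})) borel p) A" by simp
  qed
  also have "\<dots> = distr (measure_pmf (pmf_of_set {..<N})) borel p"
    using measure_of_of_measure[of "distr (measure_pmf (pmf_of_set {..<N})) borel p"] by simp
  finally show ?thesis .
qed

lemma empirical_prob:
  fixes p :: "nat \<Rightarrow> 'b::topological_space"
  assumes N: "N > 0"
  shows "prob_space (empirical N p)" "sets (empirical N p) = sets borel"
  using N by (simp_all add: empirical_distr measure_pmf.prob_space_distr)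

lemma empirical_integral:
  fixes p :: "nat \<Rightarrow> 'b::topological_space" and f :: "'b \<Rightarrow> real"
  assumes N: "N > 0" and f: "f \<in> borel_measurable borel"
  shows "(\<integral>z. f z \<partial>empirical N p) = (\<Sum>i<N. f (p i)) / real N"
proof -
  have ne: "{..<N} \<noteq> {}" using N by auto
  show ?thesis
    using N f ne by (simp add: empirical_distr integral_distr integral_pmf_of_set)
qed

lemma empirical_nn_integral:
  fixes p :: "nat \<Rightarrow> 'b::topological_space" and f :: "'b \<Rightarrow> ennreal"
  assumes N: "N > 0" and f: "f \<in> borel_measurable borel"
  shows "(\<integral>\<^sup>+z. f z \<partial>empirical N p) = (\<Sum>i<N. f (p i)) / of_nat N"
proof -
  have ne: "{..<N} \<noteq> {}" using N by auto
  show ?thesis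
    using N f ne by (simp add: empirical_distr nn_integral_distr nn_integral_pmf_of_set)
qed

lemma sets_pair_borel:
  fixes M :: "'b::second_countable_topology measure"
  assumes "sets M = sets borel"
  shows "sets (M \<Otimes>\<^sub>M M) = sets (borel :: ('b \<times> 'b) measure)"
  using assms by (simp add: sets_pair_measure_cong[OF assms assms]) (metis borel_prod)

lemma empirical_pair_nn_integral:
  fixes p :: "nat \<Rightarrow> 'b::second_countable_topology" and f :: "'b \<times> 'b \<Rightarrow> ennreal"
  assumes N: "N > 0" and f: "f \<in> borel_measurable borel"
  shows "(\<integral>\<^sup>+z. f z \<partial>(empirical N p \<Otimes>\<^sub>M empirical N p))
     = (\<Sum>i<N. \<Sum>j<N. f (p i, p j)) / (of_nat N * of_nat N)"
proof -
  interpret E: prob_space "empirical N p" by (rule empirical_prob(1)[OF N])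
  have sE: "sets (empirical N p) = sets borel" by (rule empirical_prob(2)[OF N])
  have fm: "f \<in> borel_measurable (empirical N p \<Otimes>\<^sub>M empirical N p)"
    using f measurable_cong_sets[OF sets_pair_borel[OF sE] refl] by blast
  have "(\<integral>\<^sup>+z. f z \<partial>(empirical N p \<Otimes>\<^sub>M empirical N p))
     = (\<integral>\<^sup>+ x. \<integral>\<^sup>+ y. f (x, y) \<partial>empirical N p \<partial>empirical N p)"
    using E.nn_integral_fst[OF fm] by simp
  also have "\<dots> = (\<integral>\<^sup>+ x. (\<Sum>j<N. f (x, p j)) / of_nat N \<partial>empirical N p)"
    by (rule nn_integral_cong, rule empirical_nn_integral[OF N]) (use f in measurable)
  also have "\<dots> = (\<Sum>i<N. (\<Sum>j<N. f (p i, p j)) / of_nat N) / of_nat N"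
    by (rule empirical_nn_integral[OF N]) (use f in measurable)
  also have "\<dots> = (\<Sum>i<N. \<Sum>j<N. f (p i, p j)) / (of_nat N * of_nat N)"
    by (simp add: divide_ennreal_def sum_distrib_right mult.assoc ennreal_inverse_mult of_nat_less_top)
  finally show ?thesis .
qed

lemma psi_nonneg: "0 \<le> psi a s" by (simp add: psi_def)

lemma sym_sum_identity:
  fixes V :: "nat \<Rightarrow> 'a::real_inner" and w :: "nat \<Rightarrow> nat \<Rightarrow> real"
  assumes sym: "\<And>i j. w i j = w j i"
  shows "2 * (\<Sum>i<N. \<Sum>j<N. w i j * (V i \<bullet> (V j - V i)))
       = - (\<Sum>i<N. \<Sum>j<N. w i j * (norm (V i - V j))\<^sup>2)"
proof -
  let ?S = "\<Sum>i<N. \<Sum>j<N. w i j * (V i \<bullet> (V j - V i))"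
  have sw: "?S = (\<Sum>i<N. \<Sum>j<N. w i j * (V j \<bullet> (V i - V j)))"
    by (subst sum.swap) (simp add: sym)
  have "2 * ?S = ?S + (\<Sum>i<N. \<Sum>j<N. w i j * (V j \<bullet> (V i - V j)))"
    using sw by simp
  also have "\<dots> = (\<Sum>i<N. \<Sum>j<N. w i j * (V i \<bullet> (V j - V i) + V j \<bullet> (V i - V j)))"
    by (simp add: sum.distrib distrib_left)
  also have "\<dots> = (\<Sum>i<N. \<Sum>j<N. - (w i j * (norm (V i - V j))\<^sup>2))"
    by (intro sum.cong refl) (simp add: power2_norm_eq_inner inner_diff_left inner_diff_right inner_commute algebra_simps)
  also have "\<dots> = - (\<Sum>i<N. \<Sum>j<N. w i j * (norm (V i - V j))\<^sup>2)"
    by (simp add: sum_negf)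
  finally show ?thesis .
qed

lemma discrete_energy:
  fixes X V :: "nat \<Rightarrow> real \<Rightarrow> 'a::euclidean_space"
  assumes N: "N > 0" and ab: "0 \<le> a" "a \<le> b" "b \<le> T"
    and ode_x: "\<And>i t. i < N \<Longrightarrow> t \<in> {0..T} \<Longrightarrow>
        (X i has_vector_derivative V i t) (at t within {0..T})"
    and ode_v: "\<And>i t. i < N \<Longrightarrow> t \<in> {0..T} \<Longrightarrow>
        (V i has_vector_derivative
           (1 / real N) *\<^sub>R (\<Sum>j\<in>{..<N} - {i}. psi \<alpha> (norm (X i t - X j t)) *\<^sub>R (V j t - V i t)))
        (at t within {0..T})"
  shows "((\<lambda>t. (\<Sum>i<N. \<Sum>j<N. psi \<alpha> (norm (X i t - X j t)) * (norm (V i t - V j t))\<^sup>2) / (real N * real N))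
     has_integral ((\<Sum>i<N. (norm (V i a))\<^sup>2) / real N - (\<Sum>i<N. (norm (V i b))\<^sup>2) / real N)) {a..b}"
proof -
  define A where "A i t = (1 / real N) *\<^sub>R (\<Sum>j\<in>{..<N} - {i}. psi \<alpha> (norm (X i t - X j t)) *\<^sub>R (V j t - V i t))" for i t
  define D where "D t = (\<Sum>i<N. \<Sum>j<N. psi \<alpha> (norm (X i t - X j t)) * (norm (V i t - V j t))\<^sup>2) / (real N * real N)" for t
  define E where "E t = (\<Sum>i<N. V i t \<bullet> V i t) / real N" for t
  have A2: "V i t \<bullet> A i t = (1 / real N) * (\<Sum>j<N. psi \<alpha> (norm (X i t - X j t)) * (V i t \<bullet> (V j t - V i t)))"
    if "i < N" for i t
  proof -
    have "V i t \<bullet> A i t = (1 / real N) * (\<Sum>j\<in>{..<N} - {i}. psi \<alpha> (norm (X i t - X j t)) * (V i t \<bullet> (V j t - V i t)))"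
      by (simp add: A_def inner_sum_right)
    also have "(\<Sum>j\<in>{..<N} - {i}. psi \<alpha> (norm (X i t - X j t)) * (V i t \<bullet> (V j t - V i t)))
        = (\<Sum>j<N. psi \<alpha> (norm (X i t - X j t)) * (V i t \<bullet> (V j t - V i t)))"
      using that sum.remove[of "{..<N}" i "\<lambda>j. psi \<alpha> (norm (X i t - X j t)) * (V i t \<bullet> (V j t - V i t))"]
      by simp
    finally show ?thesis .
  qed
  have derE: "(E has_vector_derivative - D t) (at t within {a..b})" if t: "t \<in> {a..b}" for t
  proof -
    have t0: "t \<in> {0..T}" using t ab by auto
    have di: "((\<lambda>t. V i t \<bullet> V i t) has_vector_derivative (V i t \<bullet> A i t + A i t \<bullet> V i t)) (at t within {0..T})"
      if "i < N" for i
      unfolding A_def by (rule bounded_bilinear.has_vector_derivative[OF bounded_bilinear_inner ode_v ode_v]) (use that t0 in auto)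
    have "(E has_vector_derivative (\<Sum>i<N. V i t \<bullet> A i t + A i t \<bullet> V i t) / real N) (at t within {0..T})"
      unfolding E_def by (intro has_vector_derivative_divide has_vector_derivative_sum di) simp
    moreover have "(\<Sum>i<N. V i t \<bullet> A i t + A i t \<bullet> V i t) / real N = - D t"
    proof -
      have "(\<Sum>i<N. V i t \<bullet> A i t + A i t \<bullet> V i t) = 2 * (\<Sum>i<N. V i t \<bullet> A i t)"
        by (simp add: inner_commute[of "A _ t"] sum_distrib_left)
      also have "\<dots> = 2 * ((1 / real N) * (\<Sum>i<N. \<Sum>j<N. psi \<alpha> (norm (X i t - X j t)) * (V i t \<bullet> (V j t - V i t))))"
        by (simp add: A2 sum_distrib_left)
      also have "\<dots> = (1 / real N) * (- (\<Sum>i<N. \<Sum>j<N. psi \<alpha> (norm (X i t - X j t)) * (norm (V i t - V j t))\<^sup>2))"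
        using sym_sum_identity[where w="\<lambda>i j. psi \<alpha> (norm (X i t - X j t))" and N=N and V="\<lambda>i. V i t"]
        by (simp add: norm_minus_commute)
      finally show ?thesis by (simp add: D_def)
    qed
    ultimately show ?thesis
      using has_vector_derivative_within_subset[of E _ t "{0..T}" "{a..b}"] ab by auto
  qed
  have "((\<lambda>t. - D t) has_integral (E b - E a)) {a..b}"
    by (rule fundamental_theorem_of_calculus[OF ab(2)]) (use derE in auto)
  from has_integral_neg[OF this] have "(D has_integral (E a - E b)) {a..b}"
    by simp
  then show ?thesis by (simp only: D_def[abs_def] E_def power2_norm_eq_inner)
qed

lemma kernel_pair_measurable:
  fixes \<mu> :: "real \<Rightarrow> 'b::second_countable_topology measure"
    and h :: "real \<Rightarrow> 'b \<times> 'b \<Rightarrow> ennreal"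
  assumes fin: "\<And>t. t \<in> S \<Longrightarrow> finite_measure (\<mu> t)"
    and sets: "\<And>t. t \<in> S \<Longrightarrow> sets (\<mu> t) = sets borel"
    and kern: "\<And>B. B \<in> sets borel \<Longrightarrow> (\<lambda>t. emeasure (\<mu> t) B) \<in> borel_measurable (restrict_space lborel S)"
    and hm: "(\<lambda>(t, x, y). h t (x, y)) \<in> borel_measurable (borel \<Otimes>\<^sub>M borel \<Otimes>\<^sub>M borel)"
  shows "(\<lambda>t. \<integral>\<^sup>+ z. h t z \<partial>(\<mu> t \<Otimes>\<^sub>M \<mu> t)) \<in> borel_measurable (restrict_space lborel S)"
proof -
  define M where "M = restrict_space lborel S"
  define c where "c t = max 1 (measure (\<mu> t) UNIV)" for t
  define \<nu> where "\<nu> t = scale_measure (ennreal (1 / c t)) (\<mu> t)" for t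
  have cpos: "c t > 0" for t by (simp add: c_def)
  have spM: "space M = S" by (simp add: M_def space_restrict_space)
  have cm: "c \<in> borel_measurable M"
  proof -
    have "(\<lambda>t. emeasure (\<mu> t) UNIV) \<in> borel_measurable M" using kern[of UNIV] by (simp add: M_def)
    then have "(\<lambda>t. enn2real (emeasure (\<mu> t) UNIV)) \<in> borel_measurable M" by measurable
    then show ?thesis unfolding c_def measure_def by measurable
  qed
  have sub: "subprob_space (\<nu> t)" if "t \<in> S" for t
  proof (rule subprob_spaceI)
    interpret finite_measure "\<mu> t" using fin[OF that] .
    have sp: "space (\<mu> t) = UNIV" using sets[OF that] sets_eq_imp_space_eq by fastforce
    have "emeasure (\<nu> t) (space (\<nu> t)) = ennreal (1 / c t) * ennreal (measure (\<mu> t) UNIV)"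
      by (simp add: \<nu>_def space_scale_measure sp emeasure_eq_measure)
    also have "\<dots> = ennreal (measure (\<mu> t) UNIV / c t)"
      by (simp add: ennreal_mult[symmetric] cpos less_imp_le)
    also have "\<dots> \<le> 1" using cpos[of t] by (simp add: c_def)
    finally show "emeasure (\<nu> t) (space (\<nu> t)) \<le> 1" .
    show "space (\<nu> t) \<noteq> {}" by (simp add: \<nu>_def space_scale_measure sp)
  qed
  have \<nu>m: "\<nu> \<in> measurable M (subprob_algebra borel)"
  proof (rule measurable_subprob_algebra)
    show "subprob_space (\<nu> a)" if "a \<in> space M" for a using sub that spM by auto
    show "sets (\<nu> a) = sets borel" if "a \<in> space M" for a using sets that spM by (simp add: \<nu>_def)
    show "(\<lambda>a. emeasure (\<nu> a) A) \<in> borel_measurable M" if "A \<in> sets borel" for A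
    proof -
      have "(\<lambda>a. emeasure (\<mu> a) A) \<in> borel_measurable M" using kern[OF that] by (simp add: M_def)
      then show ?thesis unfolding \<nu>_def emeasure_scale_measure using cm by measurable
    qed
  qed
  have scale: "(\<integral>\<^sup>+ y. f y \<partial>\<mu> t) = ennreal (c t) * (\<integral>\<^sup>+ y. f y \<partial>\<nu> t)"
    if "t \<in> S" "f \<in> borel_measurable borel" for f t
  proof -
    have fm: "f \<in> borel_measurable (\<mu> t)" using that sets[OF that(1)] measurable_cong_sets by blast
    have "ennreal (c t) * (\<integral>\<^sup>+ y. f y \<partial>\<nu> t) = (ennreal (c t) * ennreal (1 / c t)) * (\<integral>\<^sup>+ y. f y \<partial>\<mu> t)"
      by (simp add: \<nu>_def nn_integral_scale_measure[OF fm] mult.assoc)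
    also have "ennreal (c t) * ennreal (1 / c t) = 1"
      using cpos[of t] by (simp add: ennreal_mult[symmetric] less_imp_le)
    finally show ?thesis by simp
  qed
  have idm: "(\<lambda>t. t) \<in> measurable M borel"
    unfolding M_def by (rule measurable_restrict_space1) simp
  have hB: "h t \<in> borel_measurable (borel :: ('b \<times> 'b) measure)" for t
  proof -
    have "Pair t \<in> measurable (borel \<Otimes>\<^sub>M borel) (borel \<Otimes>\<^sub>M (borel \<Otimes>\<^sub>M borel))"
      by (rule measurable_Pair1') simp
    from measurable_compose[OF this hm]
    have "h t \<in> borel_measurable (borel \<Otimes>\<^sub>M borel)" by (simp add: case_prod_beta')
    then show ?thesis by (simp add: borel_prod)
  qed
  have h2: "(\<lambda>(tx, y). h (fst tx) (snd tx, y)) \<in> borel_measurable ((M \<Otimes>\<^sub>M borel) \<Otimes>\<^sub>M borel)"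
  proof -
    have g: "(\<lambda>p. (fst (fst p), snd (fst p), snd p)) \<in> measurable ((M \<Otimes>\<^sub>M borel) \<Otimes>\<^sub>M borel) (borel \<Otimes>\<^sub>M (borel \<Otimes>\<^sub>M borel))"
    proof (intro measurable_Pair)
      show "(\<lambda>p. fst (fst p)) \<in> measurable ((M \<Otimes>\<^sub>M borel) \<Otimes>\<^sub>M borel) borel"
        by (rule measurable_compose[OF measurable_compose[OF measurable_fst measurable_fst] idm])
      show "(\<lambda>p. snd (fst p)) \<in> measurable ((M \<Otimes>\<^sub>M borel) \<Otimes>\<^sub>M borel) borel"
        using measurable_compose[OF measurable_fst measurable_snd] by simp
      show "snd \<in> measurable ((M \<Otimes>\<^sub>M borel) \<Otimes>\<^sub>M borel) borel"
        by (rule measurable_snd)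
    qed
    from measurable_compose[OF g hm] show ?thesis by (simp add: case_prod_beta')
  qed
  define F where "F tx = (\<integral>\<^sup>+ y. h (fst tx) (snd tx, y) \<partial>\<nu> (fst tx))" for tx
  have Fm: "F \<in> borel_measurable (M \<Otimes>\<^sub>M borel)"
    unfolding F_def
    by (rule nn_integral_measurable_subprob_algebra2[OF h2 measurable_compose[OF measurable_fst \<nu>m]])
  have G2: "(\<lambda>(t, x). ennreal (c t) * F (t, x)) \<in> borel_measurable (M \<Otimes>\<^sub>M borel)"
  proof -
    have "(\<lambda>p. ennreal (c (fst p))) \<in> borel_measurable (M \<Otimes>\<^sub>M borel)"
      by (rule measurable_compose[OF measurable_compose[OF measurable_fst cm] measurable_ennreal])
    from borel_measurable_times_ennreal[OF this Fm] show ?thesis by (simp add: case_prod_beta')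
  qed
  have Gm: "(\<lambda>t. \<integral>\<^sup>+ x. ennreal (c t) * F (t, x) \<partial>\<nu> t) \<in> borel_measurable M"
    by (rule nn_integral_measurable_subprob_algebra2[OF G2 \<nu>m])
  have eq: "(\<integral>\<^sup>+ z. h t z \<partial>(\<mu> t \<Otimes>\<^sub>M \<mu> t)) = ennreal (c t) * (\<integral>\<^sup>+ x. ennreal (c t) * F (t, x) \<partial>\<nu> t)"
    if t: "t \<in> S" for t
  proof -
    interpret finite_measure "\<mu> t" using fin[OF t] .
    have hP: "h t \<in> borel_measurable (\<mu> t \<Otimes>\<^sub>M \<mu> t)"
      using hB measurable_cong_sets[OF sets_pair_borel[OF sets[OF t]] refl] by blast
    have Fx: "(\<lambda>x. F (t, x)) \<in> borel_measurable borel"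
    proof -
      have "t \<in> space M" using t spM by simp
      then have "Pair t \<in> measurable borel (M \<Otimes>\<^sub>M borel)" by (rule measurable_Pair1')
      then show ?thesis using Fm by (rule measurable_compose)
    qed
    have "(\<integral>\<^sup>+ z. h t z \<partial>(\<mu> t \<Otimes>\<^sub>M \<mu> t)) = (\<integral>\<^sup>+ x. \<integral>\<^sup>+ y. h t (x, y) \<partial>\<mu> t \<partial>\<mu> t)"
      using nn_integral_fst[OF hP] by simp
    also have "\<dots> = (\<integral>\<^sup>+ x. ennreal (c t) * F (t, x) \<partial>\<mu> t)"
    proof (rule nn_integral_cong)
      fix x
      have "(\<lambda>y. h t (x, y)) \<in> borel_measurable borel"
        using measurable_compose[OF measurable_Pair1'[of x borel borel] hB[of t, unfolded borel_prod[symmetric]]] by simp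
      then show "(\<integral>\<^sup>+ y. h t (x, y) \<partial>\<mu> t) = ennreal (c t) * F (t, x)"
        using scale[OF t] by (simp add: F_def)
    qed
    also have "\<dots> = ennreal (c t) * (\<integral>\<^sup>+ x. ennreal (c t) * F (t, x) \<partial>\<nu> t)"
      by (rule scale[OF t], rule borel_measurable_times_ennreal[OF borel_measurable_const Fx])
    finally show ?thesis .
  qed
  have "(\<lambda>t. ennreal (c t) * (\<integral>\<^sup>+ x. ennreal (c t) * F (t, x) \<partial>\<nu> t)) \<in> borel_measurable M"
    by (rule borel_measurable_times_ennreal[OF measurable_compose[OF cm measurable_ennreal] Gm])
  then have "(\<lambda>t. \<integral>\<^sup>+ z. h t z \<partial>(\<mu> t \<Otimes>\<^sub>M \<mu> t)) \<in> borel_measurable M"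
    by (rule measurable_cong[THEN iffD1, rotated]) (simp add: eq spM)
  then show ?thesis by (simp add: M_def)
qed

definition kf :: "real \<Rightarrow> nat \<Rightarrow> ('a::real_normed_vector \<times> 'a) \<times> ('a \<times> 'a) \<Rightarrow> real" where
  "kf \<alpha> n z = min (real (Suc n)) ((norm (snd (fst z) - snd (snd z)))\<^sup>2 /
      (max (norm (fst (fst z) - fst (snd z))) (1 / real (Suc n))) powr \<alpha>)
      * min 1 (real (Suc n) * norm (fst (fst z) - fst (snd z)))"

definition phif :: "real \<Rightarrow> real \<Rightarrow> nat \<Rightarrow> real \<Rightarrow> real" where
  "phif t1 t2 n t = min 1 (real (Suc n) * max 0 (min (t - t1) (t2 - t)))"

lemma kf_nonneg: "0 \<le> kf \<alpha> n z"
  unfolding kf_def by (intro mult_nonneg_nonneg) auto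

lemma kf_le: "kf \<alpha> n z \<le> real (Suc n)"
proof -
  have "kf \<alpha> n z \<le> min (real (Suc n)) ((norm (snd (fst z) - snd (snd z)))\<^sup>2 /
      (max (norm (fst (fst z) - fst (snd z))) (1 / real (Suc n))) powr \<alpha>) * 1"
    unfolding kf_def by (intro mult_left_mono) auto
  also have "\<dots> \<le> real (Suc n)" by simp
  finally show ?thesis .
qed

lemma kf_mono:
  assumes "0 \<le> \<alpha>" "n \<le> m"
  shows "kf \<alpha> n z \<le> kf \<alpha> m z"
proof -
  define d where "d = norm (fst (fst z) - fst (snd z))"
  define q where "q = (norm (snd (fst z) - snd (snd z)))\<^sup>2"
  have q0: "0 \<le> q" by (simp add: q_def)
  have nm: "real (Suc n) \<le> real (Suc m)" using assms by simp
  have "1 / real (Suc m) \<le> 1 / real (Suc n)" using nm by (simp add: frac_le)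
  then have mx: "max d (1 / real (Suc m)) \<le> max d (1 / real (Suc n))" by simp
  have pos: "0 < max d (1 / real (Suc m))" by (simp add: less_max_iff_disj)
  have "max d (1 / real (Suc m)) powr \<alpha> \<le> max d (1 / real (Suc n)) powr \<alpha>"
    using mx pos assms(1) by (intro powr_mono2) auto
  moreover have "0 < max d (1 / real (Suc m)) powr \<alpha>" using pos by simp
  moreover have "0 < max d (1 / real (Suc n)) powr \<alpha>"
  proof -
    have "0 < max d (1 / real (Suc n))" by (simp add: less_max_iff_disj)
    then show ?thesis by simp
  qed
  ultimately have "q / max d (1 / real (Suc n)) powr \<alpha> \<le> q / max d (1 / real (Suc m)) powr \<alpha>"
    using q0 by (intro divide_left_mono) auto
  then have A: "min (real (Suc n)) (q / max d (1 / real (Suc n)) powr \<alpha>)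
      \<le> min (real (Suc m)) (q / max d (1 / real (Suc m)) powr \<alpha>)"
    by (rule min.mono[OF nm])
  have d0: "0 \<le> d" by (simp add: d_def)
  have B: "min 1 (real (Suc n) * d) \<le> min 1 (real (Suc m) * d)"
    by (intro min.mono mult_right_mono) (use nm d0 in auto)
  have "kf \<alpha> n z = min (real (Suc n)) (q / max d (1 / real (Suc n)) powr \<alpha>) * min 1 (real (Suc n) * d)"
    by (simp add: kf_def d_def q_def)
  also have "\<dots> \<le> min (real (Suc m)) (q / max d (1 / real (Suc m)) powr \<alpha>) * min 1 (real (Suc m) * d)"
    using A B q0 d0 by (intro mult_mono) auto
  also have "\<dots> = kf \<alpha> m z" by (simp add: kf_def d_def q_def)
  finally show ?thesis .
qed

lemma kf_psi:
  assumes "0 \<le> \<alpha>"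
  shows "kf \<alpha> n z \<le> psi \<alpha> (norm (fst (fst z) - fst (snd z))) * (norm (snd (fst z) - snd (snd z)))\<^sup>2"
proof -
  define d where "d = norm (fst (fst z) - fst (snd z))"
  define q where "q = (norm (snd (fst z) - snd (snd z)))\<^sup>2"
  have q0: "0 \<le> q" by (simp add: q_def)
  have d0: "0 \<le> d" by (simp add: d_def)
  have kfe: "kf \<alpha> n z = min (real (Suc n)) (q / max d (1 / real (Suc n)) powr \<alpha>) * min 1 (real (Suc n) * d)"
    by (simp add: kf_def d_def q_def)
  show ?thesis
  proof (cases "d = 0")
    case True
    then show ?thesis by (simp add: kfe d_def[symmetric] q_def[symmetric] psi_def)
  next
    case False
    then have dp: "0 < d" using d0 by simp
    have "kf \<alpha> n z \<le> (q / max d (1 / real (Suc n)) powr \<alpha>) * 1"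
      unfolding kfe using q0 d0 by (intro mult_mono) auto
    also have "\<dots> \<le> q / d powr \<alpha>"
    proof -
      have "d powr \<alpha> \<le> max d (1 / real (Suc n)) powr \<alpha>"
        by (rule powr_mono2) (use assms dp in auto)
      then have "q / max d (1 / real (Suc n)) powr \<alpha> \<le> q / d powr \<alpha>"
        by (rule divide_left_mono) (use q0 dp in auto)
      then show ?thesis by simp
    qed
    also have "\<dots> = psi \<alpha> d * q"
      using dp by (simp add: psi_def powr_minus divide_inverse)
    finally show ?thesis by (simp add: d_def q_def)
  qed
qed

lemma kf_lim:
  "(\<lambda>n. kf \<alpha> n z) \<longlonglongrightarrow>
     (if fst (fst z) = fst (snd z) then 0
      else (norm (snd (fst z) - snd (snd z)))\<^sup>2 / (norm (fst (fst z) - fst (snd z))) powr \<alpha>)"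
proof -
  define d where "d = norm (fst (fst z) - fst (snd z))"
  define q where "q = (norm (snd (fst z) - snd (snd z)))\<^sup>2"
  have kfe: "kf \<alpha> n z = min (real (Suc n)) (q / max d (1 / real (Suc n)) powr \<alpha>) * min 1 (real (Suc n) * d)" for n
    by (simp add: kf_def d_def q_def)
  show ?thesis
  proof (cases "fst (fst z) = fst (snd z)")
    case True
    then have "d = 0" by (simp add: d_def)
    then have "kf \<alpha> n z = 0" for n by (simp add: kfe)
    then show ?thesis using True by simp
  next
    case False
    then have dp: "0 < d" by (simp add: d_def)
    define r where "r = q / d powr \<alpha>"
    have r0: "0 \<le> r" by (simp add: r_def q_def)
    obtain N :: nat where N: "1 / d + r < real N" using reals_Archimedean2 by blast
    have ev: "eventually (\<lambda>n. r = kf \<alpha> n z) sequentially"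
      unfolding eventually_sequentially
    proof (intro exI allI impI)
      fix n assume "N \<le> n"
      then have Nn: "real N \<le> real (Suc n)" by simp
      have id: "1 / d < real (Suc n)" using N Nn r0 by linarith
      have m1: "r \<le> real (Suc n)" using N Nn dp r0 by (smt (verit) divide_pos_pos zero_less_one)
      have d1: "1 \<le> real (Suc n) * d"
        using id dp by (simp add: divide_less_eq mult.commute)
      have "1 / real (Suc n) \<le> d"
        using d1 by (simp add: divide_le_eq mult.commute)
      then have mx: "max d (1 / real (Suc n)) = d" by (rule max_absorb1)
      have "min 1 (real (Suc n) * d) = 1" using d1 by (rule min_absorb1)
      moreover have "min (real (Suc n)) r = r" using m1 by (rule min_absorb2)
      ultimately show "r = kf \<alpha> n z" unfolding kfe mx r_def by simp
    qed
    have "(\<lambda>n. kf \<alpha> n z) \<longlonglongrightarrow> r"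
      by (rule Lim_transform_eventually[OF tendsto_const ev])
    then show ?thesis using False by (simp add: d_def q_def r_def)
  qed
qed

lemma max_inv_ne: "max (a::real) (1 / (1 + real n)) \<noteq> 0"
proof -
  have "0 < 1 / (1 + real n)" by simp
  then show ?thesis by (auto simp: max_def)
qed

lemma kf_cont: "continuous_on UNIV (kf \<alpha> n)"
  unfolding kf_def
  by (intro continuous_intros) (simp_all add: max_inv_ne)

lemma phif_nonneg: "0 \<le> phif t1 t2 n t" by (simp add: phif_def)

lemma phif_le: "phif t1 t2 n t \<le> indicator {t1..t2} t"
  by (auto simp: phif_def indicator_def)

lemma phif_mono: "n \<le> m \<Longrightarrow> phif t1 t2 n t \<le> phif t1 t2 m t"
  unfolding phif_def by (intro min.mono mult_right_mono) auto

lemma phif_lim: "(\<lambda>n. phif t1 t2 n t) \<longlonglongrightarrow> indicator {t1<..<t2} t"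
proof (cases "t \<in> {t1<..<t2}")
  case True
  define s where "s = min (t - t1) (t2 - t)"
  have sp: "0 < s" using True by (simp add: s_def)
  obtain N :: nat where N: "1 / s < real N" using reals_Archimedean2 by blast
  have "eventually (\<lambda>n. phif t1 t2 n t = 1) sequentially"
    unfolding eventually_sequentially
  proof (intro exI allI impI)
    fix n assume "N \<le> n"
    then have "1 / s < real (Suc n)" using N by simp
    then have "1 \<le> real (Suc n) * s" using sp by (simp add: field_simps)
    then show "phif t1 t2 n t = 1" using sp by (simp add: phif_def s_def[symmetric])
  qed
  then have "(\<lambda>n. phif t1 t2 n t) \<longlonglongrightarrow> 1"
    by (rule tendsto_eventually)
  then show ?thesis using True by simp
next
  case False
  then have "max 0 (min (t - t1) (t2 - t)) = 0" by auto
  then show ?thesis using False by (simp add: phif_def)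
qed

lemma phif_cont: "continuous_on UNIV (phif t1 t2 n)"
  unfolding phif_def by (intro continuous_intros)

lemma empirical_pair_integral:
  fixes p :: "nat \<Rightarrow> 'b::second_countable_topology" and f :: "'b \<times> 'b \<Rightarrow> real"
  assumes N: "N > 0" and f: "f \<in> borel_measurable borel" and f0: "\<And>z. 0 \<le> f z"
  shows "(\<integral>z. f z \<partial>(empirical N p \<Otimes>\<^sub>M empirical N p))
     = (\<Sum>i<N. \<Sum>j<N. f (p i, p j)) / (real N * real N)"
proof -
  have sE: "sets (empirical N p) = sets borel" by (rule empirical_prob(2)[OF N])
  have fm: "f \<in> borel_measurable (empirical N p \<Otimes>\<^sub>M empirical N p)"
    using f measurable_cong_sets[OF sets_pair_borel[OF sE] refl] by blast
  have ef: "(\<lambda>z. ennreal (f z)) \<in> borel_measurable borel"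
    by (rule measurable_compose[OF f measurable_ennreal])
  have "(\<integral>z. f z \<partial>(empirical N p \<Otimes>\<^sub>M empirical N p))
      = enn2real (\<integral>\<^sup>+z. ennreal (f z) \<partial>(empirical N p \<Otimes>\<^sub>M empirical N p))"
    by (rule integral_eq_nn_integral[OF fm]) (simp add: f0)
  also have "(\<integral>\<^sup>+z. ennreal (f z) \<partial>(empirical N p \<Otimes>\<^sub>M empirical N p))
      = (\<Sum>i<N. \<Sum>j<N. ennreal (f (p i, p j))) / (of_nat N * of_nat N)"
    by (rule empirical_pair_nn_integral[OF N ef])
  also have "\<dots> = ennreal ((\<Sum>i<N. \<Sum>j<N. f (p i, p j)) / (real N * real N))"
  proof -
    have "(\<Sum>i<N. \<Sum>j<N. ennreal (f (p i, p j))) = ennreal (\<Sum>i<N. \<Sum>j<N. f (p i, p j))"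
      by (simp add: f0 sum_nonneg)
    moreover have "(of_nat N * of_nat N :: ennreal) = ennreal (real N * real N)"
      by (simp add: ennreal_of_nat_eq_real_of_nat ennreal_mult)
    ultimately show ?thesis
      using N by (simp add: divide_ennreal f0 sum_nonneg)
  qed
  also have "enn2real \<dots> = (\<Sum>i<N. \<Sum>j<N. f (p i, p j)) / (real N * real N)"
    by (simp add: f0 sum_nonneg)
  finally show ?thesis .
qed

lemma finite_pair_self:
  assumes "finite_measure M" shows "finite_measure (M \<Otimes>\<^sub>M M)"
  using finite_measure_pair_measure[OF assms assms] .

theorem mainTheorem9:
  fixes T \<alpha> M :: real
    and x v :: "nat \<Rightarrow> nat \<Rightarrow> real \<Rightarrow> 'a::euclidean_space"
    and \<rho>0 :: "'a measure" and u0 :: "'a \<Rightarrow> 'a"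
    and \<sigma> :: "nat \<Rightarrow> nat"
    and \<mu> :: "real \<Rightarrow> ('a \<times> 'a) measure"
    and AE_set :: "real set"
    and t1 t2 :: real
  assumes T_pos: "T > 0"
    and alpha: "1 \<le> \<alpha>" "\<alpha> \<le> 2"
    (* initial datum rho_0: compactly supported Borel probability measure; u_0 in L^infty(rho_0) *)
    and rho0_prob: "prob_space \<rho>0" and rho0_sets: "sets \<rho>0 = sets borel"
    and rho0_cpt: "\<exists>K. compact K \<and> emeasure \<rho>0 (UNIV - K) = 0"
    and u0_meas: "u0 \<in> borel_measurable \<rho>0"
    and u0_bdd: "\<exists>C. AE y in \<rho>0. norm (u0 y) \<le> C"
    (* particle system: for each N >= 1, the solution on [0,T], non-collisional *)
    and distinct_init: "\<And>N i j. i < N \<Longrightarrow> j < N \<Longrightarrow> i \<noteq> j \<Longrightarrow> x N i 0 \<noteq> x N j 0"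
    and no_coll: "\<And>N i j t. i < N \<Longrightarrow> j < N \<Longrightarrow> i \<noteq> j \<Longrightarrow> t \<in> {0..T} \<Longrightarrow> x N i t \<noteq> x N j t"
    and ode_x: "\<And>N i t. i < N \<Longrightarrow> t \<in> {0..T} \<Longrightarrow>
        (x N i has_vector_derivative v N i t) (at t within {0..T})"
    and ode_v: "\<And>N i t. i < N \<Longrightarrow> t \<in> {0..T} \<Longrightarrow>
        (v N i has_vector_derivative
           (1 / real N) *\<^sub>R (\<Sum>j\<in>{..<N} - {i}. psi \<alpha> (norm (x N i t - x N j t)) *\<^sub>R (v N j t - v N i t)))
        (at t within {0..T})"
    (* narrow convergence of the initial data *)
    and init_rho: "narrow_conv (\<lambda>N. empirical N (\<lambda>i. x N i 0)) \<rho>0"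
    and init_mom: "\<And>f::'a \<Rightarrow> real. continuous_on UNIV f \<Longrightarrow> bounded (range f) \<Longrightarrow>
        (\<lambda>N. (1 / real N) *\<^sub>R (\<Sum>i<N. f (x N i 0) *\<^sub>R v N i 0)) \<longlonglongrightarrow> (\<integral>y. f y *\<^sub>R u0 y \<partial>\<rho>0)"
    (* uniform support bound *)
    and supp_N: "\<And>N i t. i < N \<Longrightarrow> t \<in> {0..T} \<Longrightarrow>
        norm (x N i t) < (T + 1) * M \<and> norm (v N i t) < M"
    (* the limit family mu_t: Borel finite measures, measurable in t *)
    and mu_fin: "\<And>t. t \<in> {0..T} \<Longrightarrow> finite_measure (\<mu> t)"
    and mu_sets: "\<And>t. t \<in> {0..T} \<Longrightarrow> sets (\<mu> t) = sets borel"
    and mu_kernel: "\<And>B. B \<in> sets borel \<Longrightarrow>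
        (\<lambda>t. emeasure (\<mu> t) B) \<in> borel_measurable (restrict_space lborel {0..T})"
    and mu_supp: "\<And>t. t \<in> {0..T} \<Longrightarrow>
        emeasure (\<mu> t) (UNIV - closure (ball 0 ((T + 1) * M) \<times> ball 0 M)) = 0"
    (* convergence along the subsequence sigma *)
    and sub: "strict_mono \<sigma>"
    and conv_mu: "narrow_conv_time T
        (\<lambda>k t. empirical (\<sigma> k) (\<lambda>i. (x (\<sigma> k) i t, v (\<sigma> k) i t))) \<mu>"
    and conv_mu2: "narrow_conv_time T
        (\<lambda>k t. empirical (\<sigma> k) (\<lambda>i. (x (\<sigma> k) i t, v (\<sigma> k) i t))
               \<Otimes>\<^sub>M empirical (\<sigma> k) (\<lambda>i. (x (\<sigma> k) i t, v (\<sigma> k) i t)))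
        (\<lambda>t. \<mu> t \<Otimes>\<^sub>M \<mu> t)"
    and conv_rho: "\<And>\<epsilon>. \<epsilon> > 0 \<Longrightarrow> eventually (\<lambda>k. \<forall>t\<in>{0..T}.
        dBL (empirical (\<sigma> k) (\<lambda>i. x (\<sigma> k) i t)) (distr (\<mu> t) borel fst) < \<epsilon>) sequentially"
    and AE_sub: "AE_set \<subseteq> {0..T}"
    and AE_full: "{0..T} - AE_set \<in> null_sets lborel"
    and conv_E: "\<And>t. t \<in> AE_set \<Longrightarrow>
        (\<lambda>k. energy (empirical (\<sigma> k) (\<lambda>i. (x (\<sigma> k) i t, v (\<sigma> k) i t)))) \<longlonglongrightarrow> energy (\<mu> t)"
    and t1: "t1 \<in> AE_set" and t2: "t2 \<in> AE_set" and t12: "t1 \<le> t2"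
  shows "energy (\<mu> t2) \<le> energy (\<mu> t1)
    \<and> (\<integral>\<^sup>+ t\<in>{t1..t2}. dissipation \<alpha> (\<mu> t) \<partial>lborel) \<le> ennreal (energy (\<mu> t1) - energy (\<mu> t2))"
proof -
  have t1T: "t1 \<in> {0..T}" and t2T: "t2 \<in> {0..T}" using t1 t2 AE_sub by auto
  define emp where "emp k t = empirical (\<sigma> k) (\<lambda>i. (x (\<sigma> k) i t, v (\<sigma> k) i t))" for k t
  define Ek where "Ek k t = (\<Sum>i<\<sigma> k. (norm (v (\<sigma> k) i t))\<^sup>2) / real (\<sigma> k)" for k t
  define Dk where "Dk k t = (\<Sum>i<\<sigma> k. \<Sum>j<\<sigma> k. psi \<alpha> (norm (x (\<sigma> k) i t - x (\<sigma> k) j t))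
      * (norm (v (\<sigma> k) i t - v (\<sigma> k) j t))\<^sup>2) / (real (\<sigma> k) * real (\<sigma> k))" for k t
  have evpos: "\<forall>k\<ge>1. 0 < \<sigma> k"
    using seq_suble[OF sub] by (metis less_le_trans zero_less_one)
  have Eemp: "energy (emp k t) = Ek k t" if "0 < \<sigma> k" for k t
  proof -
    have fm: "(\<lambda>z::'a \<times> 'a. (norm (snd z))\<^sup>2) \<in> borel_measurable borel"
      by (intro borel_measurable_continuous_onI continuous_intros)
    show ?thesis
      unfolding energy_def emp_def Ek_def using empirical_integral[OF that fm, of "\<lambda>i. (x (\<sigma> k) i t, v (\<sigma> k) i t)"] by simp
  qed
  have Dint: "(Dk k has_integral (Ek k t1 - Ek k t2)) {t1..t2}" if "0 < \<sigma> k" for k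
  proof -
    have "((\<lambda>t. (\<Sum>i<\<sigma> k. \<Sum>j<\<sigma> k. psi \<alpha> (norm (x (\<sigma> k) i t - x (\<sigma> k) j t))
      * (norm (v (\<sigma> k) i t - v (\<sigma> k) j t))\<^sup>2) / (real (\<sigma> k) * real (\<sigma> k)))
      has_integral ((\<Sum>i<\<sigma> k. (norm (v (\<sigma> k) i t1))\<^sup>2) / real (\<sigma> k) - (\<Sum>i<\<sigma> k. (norm (v (\<sigma> k) i t2))\<^sup>2) / real (\<sigma> k))) {t1..t2}"
      by (rule discrete_energy[where X="x (\<sigma> k)" and V="v (\<sigma> k)" and T=T, OF that])
         (use t1T t2T t12 ode_x ode_v in auto)
    then show ?thesis by (simp only: Dk_def[abs_def] Ek_def)
  qed
  have Dk0: "0 \<le> Dk k t" for k t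
    unfolding Dk_def by (intro divide_nonneg_nonneg sum_nonneg mult_nonneg_nonneg psi_nonneg) auto
  have Emono: "Ek k t2 \<le> Ek k t1" if "0 < \<sigma> k" for k
    using has_integral_nonneg[OF Dint[OF that]] Dk0 by simp
  have part1: "energy (\<mu> t2) \<le> energy (\<mu> t1)"
  proof (rule LIMSEQ_le[OF conv_E[OF t2] conv_E[OF t1]])
    show "\<exists>N. \<forall>n\<ge>N. energy (empirical (\<sigma> n) (\<lambda>i. (x (\<sigma> n) i t2, v (\<sigma> n) i t2)))
        \<le> energy (empirical (\<sigma> n) (\<lambda>i. (x (\<sigma> n) i t1, v (\<sigma> n) i t1)))"
      using evpos Eemp Emono unfolding emp_def by (intro exI[of _ 1]) auto
  qed
  define hh where "hh n p = phif t1 t2 n (fst p) * kf \<alpha> n (snd p)"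
    for n and p :: "real \<times> ('a \<times> 'a) \<times> ('a \<times> 'a)"
  have hh0: "0 \<le> hh n p" for n p
    unfolding hh_def by (intro mult_nonneg_nonneg phif_nonneg kf_nonneg)
  have hhle: "hh n p \<le> real (Suc n)" for n p
  proof -
    have "indicator {t1..t2} (fst p) \<le> (1::real)" by (simp add: indicator_def)
    then have "phif t1 t2 n (fst p) \<le> 1" using phif_le[of t1 t2 n "fst p"] by linarith
    then have "hh n p \<le> 1 * real (Suc n)"
      unfolding hh_def by (intro mult_mono kf_le phif_nonneg kf_nonneg) auto
    then show ?thesis by simp
  qed
  have hhc: "continuous_on UNIV (hh n)" for n
  proof -
    have "continuous_on UNIV (\<lambda>p::real \<times> ('a \<times> 'a) \<times> ('a \<times> 'a). phif t1 t2 n (fst p))"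
      by (rule continuous_on_compose2[OF phif_cont continuous_on_fst]) auto
    moreover have "continuous_on UNIV (\<lambda>p::real \<times> ('a \<times> 'a) \<times> ('a \<times> 'a). kf \<alpha> n (snd p))"
      by (rule continuous_on_compose2[OF kf_cont continuous_on_snd]) auto
    ultimately show ?thesis unfolding hh_def[abs_def] by (rule continuous_on_mult)
  qed
  have hhm: "hh n \<in> borel_measurable borel" for n
    by (rule borel_measurable_continuous_onI[OF hhc])
  have hhtest: "continuous_on ({0..T} \<times> UNIV) (hh n) \<and> bounded (hh n ` ({0..T} \<times> UNIV))" for n
  proof
    show "continuous_on ({0..T} \<times> UNIV) (hh n)" by (rule continuous_on_subset[OF hhc]) auto
    show "bounded (hh n ` ({0..T} \<times> UNIV))"
      unfolding bounded_iff using hh0 hhle by (intro exI[of _ "real (Suc n)"]) auto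
  qed
  have Gk_le: "(\<integral>z. hh n (t, z) \<partial>(emp k t \<Otimes>\<^sub>M emp k t)) \<le> indicator {t1..t2} t * Dk k t"
    if "0 < \<sigma> k" for n k t
  proof -
    have fm: "(\<lambda>z. hh n (t, z)) \<in> borel_measurable borel"
      by (rule borel_measurable_continuous_onI,
          rule continuous_on_compose2[OF hhc[of n] continuous_on_Pair[OF continuous_on_const continuous_on_id]]) auto
    have "(\<integral>z. hh n (t, z) \<partial>(emp k t \<Otimes>\<^sub>M emp k t))
      = (\<Sum>i<\<sigma> k. \<Sum>j<\<sigma> k. hh n (t, (x (\<sigma> k) i t, v (\<sigma> k) i t), (x (\<sigma> k) j t, v (\<sigma> k) j t))) / (real (\<sigma> k) * real (\<sigma> k))"
      unfolding emp_def by (rule empirical_pair_integral[OF that fm hh0])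
    also have "\<dots> \<le> (\<Sum>i<\<sigma> k. \<Sum>j<\<sigma> k. indicator {t1..t2} t * (psi \<alpha> (norm (x (\<sigma> k) i t - x (\<sigma> k) j t))
      * (norm (v (\<sigma> k) i t - v (\<sigma> k) j t))\<^sup>2)) / (real (\<sigma> k) * real (\<sigma> k))"
    proof (intro divide_right_mono sum_mono)
      fix i j
      have "kf \<alpha> n ((x (\<sigma> k) i t, v (\<sigma> k) i t), (x (\<sigma> k) j t, v (\<sigma> k) j t))
          \<le> psi \<alpha> (norm (x (\<sigma> k) i t - x (\<sigma> k) j t)) * (norm (v (\<sigma> k) i t - v (\<sigma> k) j t))\<^sup>2"
        using kf_psi[of \<alpha> n "((x (\<sigma> k) i t, v (\<sigma> k) i t), (x (\<sigma> k) j t, v (\<sigma> k) j t))"] alpha by simp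
      then show "hh n (t, (x (\<sigma> k) i t, v (\<sigma> k) i t), (x (\<sigma> k) j t, v (\<sigma> k) j t))
          \<le> indicator {t1..t2} t * (psi \<alpha> (norm (x (\<sigma> k) i t - x (\<sigma> k) j t))
              * (norm (v (\<sigma> k) i t - v (\<sigma> k) j t))\<^sup>2)"
        unfolding hh_def fst_conv snd_conv
        by (intro mult_mono phif_le kf_nonneg) (auto simp: indicator_def)
    qed simp
    also have "\<dots> = indicator {t1..t2} t * Dk k t"
      by (simp add: Dk_def sum_distrib_left)
    finally show ?thesis .
  qed
  have Gk_int: "(LINT t:{0..T}|lborel. (\<integral>z. hh n (t, z) \<partial>(emp k t \<Otimes>\<^sub>M emp k t))) \<le> Ek k t1 - Ek k t2"
    if "0 < \<sigma> k" for n k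
  proof (cases "set_integrable lborel {0..T} (\<lambda>t. \<integral>z. hh n (t, z) \<partial>(emp k t \<Otimes>\<^sub>M emp k t))")
    case True
    have r: "((\<lambda>t. if t \<in> {t1..t2} then Dk k t else 0) has_integral (Ek k t1 - Ek k t2)) {0..T}"
      using Dint[OF that] t1T t2T by (subst has_integral_restrict) auto
    have "(LINT t:{0..T}|lborel. (\<integral>z. hh n (t, z) \<partial>(emp k t \<Otimes>\<^sub>M emp k t)))
        = integral {0..T} (\<lambda>t. \<integral>z. hh n (t, z) \<partial>(emp k t \<Otimes>\<^sub>M emp k t))"
      by (rule set_borel_integral_eq_integral(2)[OF True])
    also have "\<dots> \<le> integral {0..T} (\<lambda>t. if t \<in> {t1..t2} then Dk k t else 0)"
    proof (rule integral_le)
      show "(\<lambda>t. \<integral>z. hh n (t, z) \<partial>(emp k t \<Otimes>\<^sub>M emp k t)) integrable_on {0..T}"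
        by (rule set_borel_integral_eq_integral(1)[OF True])
      show "(\<lambda>t. if t \<in> {t1..t2} then Dk k t else 0) integrable_on {0..T}"
        using r by blast
      fix t assume "t \<in> {0..T}"
      show "(\<integral>z. hh n (t, z) \<partial>(emp k t \<Otimes>\<^sub>M emp k t)) \<le> (if t \<in> {t1..t2} then Dk k t else 0)"
        using Gk_le[OF that, where n=n and t=t] by (cases "t1 \<le> t \<and> t \<le> t2") auto
    qed
    also have "\<dots> = Ek k t1 - Ek k t2" using r by (rule integral_unique)
    finally show ?thesis .
  next
    case False
    then have "(LINT t:{0..T}|lborel. (\<integral>z. hh n (t, z) \<partial>(emp k t \<Otimes>\<^sub>M emp k t))) = 0"
      unfolding set_lebesgue_integral_def set_integrable_def by (rule not_integrable_integral_eq)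
    then show ?thesis using Emono[OF that] by simp
  qed
  define G where "G n t = (\<integral>z. hh n (t, z) \<partial>(\<mu> t \<Otimes>\<^sub>M \<mu> t))" for n t
  define Gn where "Gn n t = (\<integral>\<^sup>+z. ennreal (hh n (t, z)) \<partial>(\<mu> t \<Otimes>\<^sub>M \<mu> t))" for n t
  have hhtm: "(\<lambda>z. hh n (t, z)) \<in> borel_measurable borel" for n t
    by (rule borel_measurable_continuous_onI,
        rule continuous_on_compose2[OF hhc[of n] continuous_on_Pair[OF continuous_on_const continuous_on_id]]) auto
  have B3: "(LINT t:{0..T}|lborel. G n t) \<le> energy (\<mu> t1) - energy (\<mu> t2)" for n
  proof -
    have lim: "(\<lambda>k. LINT t:{0..T}|lborel. (\<integral>z. hh n (t, z) \<partial>(emp k t \<Otimes>\<^sub>M emp k t)))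
        \<longlonglongrightarrow> (LINT t:{0..T}|lborel. G n t)"
      using conv_mu2[unfolded narrow_conv_time_def, rule_format, OF hhtest[of n]]
      unfolding emp_def G_def .
    show ?thesis
    proof (rule LIMSEQ_le[OF lim tendsto_diff[OF conv_E[OF t1] conv_E[OF t2]]])
      show "\<exists>N. \<forall>k\<ge>N. (LINT t:{0..T}|lborel. (\<integral>z. hh n (t, z) \<partial>(emp k t \<Otimes>\<^sub>M emp k t)))
          \<le> energy (empirical (\<sigma> k) (\<lambda>i. (x (\<sigma> k) i t1, v (\<sigma> k) i t1)))
            - energy (empirical (\<sigma> k) (\<lambda>i. (x (\<sigma> k) i t2, v (\<sigma> k) i t2)))"
      proof (intro exI[of _ 1] allI impI)
        fix k :: nat assume "1 \<le> k"
        then have kp: "0 < \<sigma> k" using evpos by auto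
        show "(LINT t:{0..T}|lborel. (\<integral>z. hh n (t, z) \<partial>(emp k t \<Otimes>\<^sub>M emp k t)))
          \<le> energy (empirical (\<sigma> k) (\<lambda>i. (x (\<sigma> k) i t1, v (\<sigma> k) i t1)))
            - energy (empirical (\<sigma> k) (\<lambda>i. (x (\<sigma> k) i t2, v (\<sigma> k) i t2)))"
          using Gk_int[OF kp, of n] Eemp[OF kp, of t1] Eemp[OF kp, of t2] unfolding emp_def by simp
      qed
    qed
  qed
  have fin2: "finite_measure (\<mu> t \<Otimes>\<^sub>M \<mu> t)" if "t \<in> {0..T}" for t
    by (rule finite_pair_self[OF mu_fin[OF that]])
  have sets2: "sets (\<mu> t \<Otimes>\<^sub>M \<mu> t) = sets borel" if "t \<in> {0..T}" for t
    by (rule sets_pair_borel[OF mu_sets[OF that]])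
  have hhm2: "(\<lambda>z. hh n (t, z)) \<in> borel_measurable (\<mu> t \<Otimes>\<^sub>M \<mu> t)" if "t \<in> {0..T}" for n t
    using hhtm measurable_cong_sets[OF sets2[OF that] refl] by blast
  have Gn_fin: "Gn n t < top" if "t \<in> {0..T}" for n t
  proof -
    interpret F: finite_measure "\<mu> t \<Otimes>\<^sub>M \<mu> t" by (rule fin2[OF that])
    have "Gn n t \<le> (\<integral>\<^sup>+z. ennreal (real (Suc n)) \<partial>(\<mu> t \<Otimes>\<^sub>M \<mu> t))"
      unfolding Gn_def by (intro nn_integral_mono ennreal_leI hhle)
    also have "\<dots> = ennreal (real (Suc n)) * emeasure (\<mu> t \<Otimes>\<^sub>M \<mu> t) (space (\<mu> t \<Otimes>\<^sub>M \<mu> t))"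
      by simp
    also have "\<dots> < top"
      using F.emeasure_finite[of "space (\<mu> t \<Otimes>\<^sub>M \<mu> t)"] by (simp add: ennreal_mult_less_top) (simp add: less_top[symmetric])
    finally show ?thesis .
  qed
  have G_Gn: "G n t = enn2real (Gn n t)" if "t \<in> {0..T}" for n t
    unfolding G_def Gn_def by (rule integral_eq_nn_integral[OF hhm2[OF that]]) (simp add: hh0)
  have Gn_G: "Gn n t = ennreal (G n t)" if "t \<in> {0..T}" for n t
    using G_Gn[OF that] Gn_fin[OF that] by simp
  have Gn_meas: "(\<lambda>t. Gn n t) \<in> borel_measurable (restrict_space lborel {0..T})" for n
  proof -
    have e: "(\<lambda>(t, z, w). ennreal (hh n (t, z, w))) = (\<lambda>p. ennreal (hh n p))" by auto
    have "(\<lambda>p. ennreal (hh n p)) \<in> borel_measurable (borel \<Otimes>\<^sub>M (borel \<Otimes>\<^sub>M borel))"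
      unfolding borel_prod by (rule measurable_compose[OF hhm measurable_ennreal])
    then have "(\<lambda>(t, z, w). ennreal (hh n (t, z, w))) \<in> borel_measurable (borel \<Otimes>\<^sub>M (borel \<Otimes>\<^sub>M borel))"
      by (simp only: e)
    from kernel_pair_measurable[where h="\<lambda>t z. ennreal (hh n (t, z))", OF mu_fin mu_sets mu_kernel this]
    show ?thesis unfolding Gn_def by simp
  qed
  define G1 where "G1 t = (\<integral>z. (1::real) \<partial>(\<mu> t \<Otimes>\<^sub>M \<mu> t))" for t
  have G1int: "set_integrable lborel {0..T} G1"
  proof (rule ccontr)
    assume ni: "\<not> set_integrable lborel {0..T} G1"
    have test1: "continuous_on ({0..T} \<times> UNIV) (\<lambda>_::real \<times> ('a \<times> 'a) \<times> ('a \<times> 'a). 1::real)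
        \<and> bounded ((\<lambda>_::real \<times> ('a \<times> 'a) \<times> ('a \<times> 'a). 1::real) ` ({0..T} \<times> UNIV))"
    proof
      show "continuous_on ({0..T} \<times> UNIV) (\<lambda>_::real \<times> ('a \<times> 'a) \<times> ('a \<times> 'a). 1::real)"
        by (rule continuous_on_const)
      show "bounded ((\<lambda>_::real \<times> ('a \<times> 'a) \<times> ('a \<times> 'a). 1::real) ` ({0..T} \<times> UNIV))"
        by (rule bounded_subset[of "{1}"]) auto
    qed
    have lim: "(\<lambda>k. LINT t:{0..T}|lborel. (\<integral>z. (1::real) \<partial>(emp k t \<Otimes>\<^sub>M emp k t)))
        \<longlonglongrightarrow> (LINT t:{0..T}|lborel. G1 t)"
      using conv_mu2[unfolded narrow_conv_time_def, rule_format, OF test1]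
      unfolding emp_def G1_def .
    have "(LINT t:{0..T}|lborel. G1 t) = 0"
      using ni unfolding set_lebesgue_integral_def set_integrable_def by (rule not_integrable_integral_eq)
    with lim have lim0: "(\<lambda>k. LINT t:{0..T}|lborel. (\<integral>z. (1::real) \<partial>(emp k t \<Otimes>\<^sub>M emp k t))) \<longlonglongrightarrow> 0"
      by simp
    have ev: "\<forall>k\<ge>1. (LINT t:{0..T}|lborel. (\<integral>z. (1::real) \<partial>(emp k t \<Otimes>\<^sub>M emp k t))) = T"
    proof (intro allI impI)
      fix k :: nat assume "1 \<le> k"
      then have kp: "0 < \<sigma> k" using evpos by auto
      have "(\<integral>z. (1::real) \<partial>(emp k t \<Otimes>\<^sub>M emp k t)) = 1" for t
        unfolding emp_def using empirical_pair_integral[OF kp, of "\<lambda>_. 1"] kp by simp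
      then have "(LINT t:{0..T}|lborel. (\<integral>z. (1::real) \<partial>(emp k t \<Otimes>\<^sub>M emp k t)))
          = (LINT t:{0..T}|lborel. (1::real))" by simp
      also have "\<dots> = T" using T_pos by (subst set_integral_const) auto
      finally show "(LINT t:{0..T}|lborel. (\<integral>z. (1::real) \<partial>(emp k t \<Otimes>\<^sub>M emp k t))) = T" .
    qed
    have ev': "eventually (\<lambda>k. T = (LINT t:{0..T}|lborel. (\<integral>z. (1::real) \<partial>(emp k t \<Otimes>\<^sub>M emp k t)))) sequentially"
      unfolding eventually_sequentially using ev by (intro exI[of _ 1]) auto
    have "(\<lambda>k. LINT t:{0..T}|lborel. (\<integral>z. (1::real) \<partial>(emp k t \<Otimes>\<^sub>M emp k t))) \<longlonglongrightarrow> T"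
      by (rule Lim_transform_eventually[OF tendsto_const ev'])
    with lim0 have "T = 0" using LIMSEQ_unique by blast
    then show False using T_pos by simp
  qed
  have Gint: "set_integrable lborel {0..T} (G n)" for n
    unfolding set_integrable_def
  proof (rule Bochner_Integration.integrable_bound[where f="\<lambda>t. indicator {0..T} t *\<^sub>R (real (Suc n) * G1 t)"])
    show "integrable lborel (\<lambda>t. indicator {0..T} t *\<^sub>R (real (Suc n) * G1 t))"
      using G1int unfolding set_integrable_def
      by (simp add: integrable_mult_right mult.left_commute[of "indicator _ _"])
    have "(\<lambda>t. enn2real (Gn n t)) \<in> borel_measurable (restrict_space lborel {0..T})"
      by (rule borel_measurable_enn2real[OF Gn_meas])
    then have "(\<lambda>t. indicator {0..T} t *\<^sub>R enn2real (Gn n t)) \<in> borel_measurable lborel"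
      by (subst (asm) borel_measurable_restrict_space_iff) auto
    moreover have "(\<lambda>t. indicator {0..T} t *\<^sub>R enn2real (Gn n t)) = (\<lambda>t. indicator {0..T} t *\<^sub>R G n t)"
      using G_Gn by (auto simp: indicator_def fun_eq_iff)
    ultimately show "(\<lambda>t. indicator {0..T} t *\<^sub>R G n t) \<in> borel_measurable lborel" by simp
    show "AE t in lborel. norm (indicator {0..T} t *\<^sub>R G n t) \<le> norm (indicator {0..T} t *\<^sub>R (real (Suc n) * G1 t))"
    proof (rule AE_I2)
      fix t
      show "norm (indicator {0..T} t *\<^sub>R G n t) \<le> norm (indicator {0..T} t *\<^sub>R (real (Suc n) * G1 t))"
      proof (cases "t \<in> {0..T}")
        case True
        interpret F: finite_measure "\<mu> t \<Otimes>\<^sub>M \<mu> t" by (rule fin2[OF True])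
        have i1: "integrable (\<mu> t \<Otimes>\<^sub>M \<mu> t) (\<lambda>z. hh n (t, z))"
          by (rule F.integrable_const_bound[where B="real (Suc n)"]) (use hh0 hhle hhm2[OF True] in auto)
        have "G n t \<le> (\<integral>z. real (Suc n) * 1 \<partial>(\<mu> t \<Otimes>\<^sub>M \<mu> t))"
          unfolding G_def by (rule integral_mono[OF i1]) (use hhle in auto)
        also have "\<dots> = real (Suc n) * G1 t" unfolding G1_def by (rule integral_mult_right_zero)
        finally have le: "G n t \<le> real (Suc n) * G1 t" .
        have "0 \<le> G n t" unfolding G_def by (rule Bochner_Integration.integral_nonneg) (simp add: hh0)
        then show ?thesis using True le by simp
      qed simp
    qed
  qed
  have G0: "0 \<le> G n t" for n t
    unfolding G_def by (rule Bochner_Integration.integral_nonneg) (simp add: hh0)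
  have B7: "(\<integral>\<^sup>+t. Gn n t * indicator {0..T} t \<partial>lborel) \<le> ennreal (energy (\<mu> t1) - energy (\<mu> t2))" for n
  proof -
    have "(\<integral>\<^sup>+t. Gn n t * indicator {0..T} t \<partial>lborel) = (\<integral>\<^sup>+t. ennreal (indicator {0..T} t *\<^sub>R G n t) \<partial>lborel)"
      by (rule nn_integral_cong) (auto simp: indicator_def Gn_G)
    also have "\<dots> = ennreal (LINT t:{0..T}|lborel. G n t)"
      unfolding set_lebesgue_integral_def
    proof (rule nn_integral_eq_integral)
      show "integrable lborel (\<lambda>t. indicator {0..T} t *\<^sub>R G n t)" using Gint[of n] unfolding set_integrable_def .
      show "AE t in lborel. 0 \<le> indicator {0..T} t *\<^sub>R G n t"
        by (rule AE_I2) (auto simp: indicator_def G0)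
    qed
    also have "\<dots> \<le> ennreal (energy (\<mu> t1) - energy (\<mu> t2))" by (rule ennreal_leI[OF B3])
    finally show ?thesis .
  qed
  have hh_mono: "hh n p \<le> hh m p" if "n \<le> m" for n m p
    unfolding hh_def using alpha that
    by (intro mult_mono phif_mono kf_mono phif_nonneg kf_nonneg) auto
  have B8: "(\<lambda>n. Gn n t) \<longlonglongrightarrow> indicator {t1<..<t2} t * dissipation \<alpha> (\<mu> t)" if tT: "t \<in> {0..T}" for t
  proof -
    define F where "F z = (if fst (fst z) = fst (snd z) then 0
      else (norm (snd (fst z) - snd (snd z)))\<^sup>2 / (norm (fst (fst z) - fst (snd z))) powr \<alpha>)"
      for z :: "('a \<times> 'a) \<times> ('a \<times> 'a)"
    have "(\<lambda>n. Gn n t) \<longlonglongrightarrow> (\<integral>\<^sup>+z. ennreal (indicator {t1<..<t2} t * F z) \<partial>(\<mu> t \<Otimes>\<^sub>M \<mu> t))"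
      unfolding Gn_def
    proof (rule nn_integral_LIMSEQ)
      show "incseq (\<lambda>n z. ennreal (hh n (t, z)))"
        unfolding incseq_def le_fun_def using hh_mono by (auto intro: ennreal_leI)
      show "(\<lambda>z. ennreal (hh n (t, z))) \<in> borel_measurable (\<mu> t \<Otimes>\<^sub>M \<mu> t)" for n
        by (rule measurable_compose[OF hhm2[OF tT] measurable_ennreal])
      show "(\<lambda>n. ennreal (hh n (t, z))) \<longlonglongrightarrow> ennreal (indicator {t1<..<t2} t * F z)" for z
        unfolding hh_def fst_conv snd_conv F_def
        by (intro tendsto_ennrealI tendsto_mult phif_lim kf_lim)
    qed
    also have "(\<integral>\<^sup>+z. ennreal (indicator {t1<..<t2} t * F z) \<partial>(\<mu> t \<Otimes>\<^sub>M \<mu> t))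
        = indicator {t1<..<t2} t * dissipation \<alpha> (\<mu> t)"
    proof (cases "t \<in> {t1<..<t2}")
      case True
      have "(\<integral>\<^sup>+z. ennreal (indicator {t1<..<t2} t * F z) \<partial>(\<mu> t \<Otimes>\<^sub>M \<mu> t))
          = (\<integral>\<^sup>+z. ennreal (F z) \<partial>(\<mu> t \<Otimes>\<^sub>M \<mu> t))" using True by simp
      also have "\<dots> = dissipation \<alpha> (\<mu> t)"
        unfolding dissipation_def
        by (rule nn_integral_cong) (auto simp: F_def indicator_def dist_norm)
      finally show ?thesis using True by simp
    next
      case False
      then show ?thesis by simp
    qed
    finally show ?thesis .
  qed
  have B9: "(\<lambda>n. \<integral>\<^sup>+t. Gn n t * indicator {0..T} t \<partial>lborel)
      \<longlonglongrightarrow> (\<integral>\<^sup>+t. (indicator {t1<..<t2} t * dissipation \<alpha> (\<mu> t)) * indicator {0..T} t \<partial>lborel)"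
  proof (rule nn_integral_LIMSEQ)
    show "incseq (\<lambda>n t. Gn n t * indicator {0..T} t)"
      unfolding incseq_def le_fun_def
    proof (intro allI impI)
      fix m n :: nat and t :: real assume "m \<le> n"
      show "Gn m t * indicator {0..T} t \<le> Gn n t * indicator {0..T} t"
        unfolding Gn_def
        by (intro mult_right_mono nn_integral_mono ennreal_leI hh_mono[OF \<open>m \<le> n\<close>]) auto
    qed
    show "(\<lambda>t. Gn n t * indicator {0..T} t) \<in> borel_measurable lborel" for n
      using Gn_meas[of n] by (subst (asm) borel_measurable_restrict_space_iff_ennreal) auto
    show "(\<lambda>n. Gn n t * indicator {0..T} t) \<longlonglongrightarrow> indicator {t1<..<t2} t * dissipation \<alpha> (\<mu> t) * indicator {0..T} t" for t
    proof (cases "t \<in> {0..T}")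
      case True
      then show ?thesis using B8[OF True] by simp
    next
      case False
      then show ?thesis by simp
    qed
  qed
  have lim_le: "(\<integral>\<^sup>+t. (indicator {t1<..<t2} t * dissipation \<alpha> (\<mu> t)) * indicator {0..T} t \<partial>lborel)
      \<le> ennreal (energy (\<mu> t1) - energy (\<mu> t2))"
    by (rule LIMSEQ_le_const2[OF B9]) (use B7 in auto)
  have "(\<integral>\<^sup>+ t\<in>{t1..t2}. dissipation \<alpha> (\<mu> t) \<partial>lborel)
      = (\<integral>\<^sup>+t. (indicator {t1<..<t2} t * dissipation \<alpha> (\<mu> t)) * indicator {0..T} t \<partial>lborel)"
  proof (rule nn_integral_cong_AE)
    have "AE t in lborel. t \<noteq> t1" by (rule AE_lborel_singleton)
    moreover have "AE t in lborel. t \<noteq> t2" by (rule AE_lborel_singleton)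
    ultimately show "AE t in lborel. dissipation \<alpha> (\<mu> t) * indicator {t1..t2} t
        = indicator {t1<..<t2} t * dissipation \<alpha> (\<mu> t) * indicator {0..T} t"
    proof eventually_elim
      case (elim t)
      show ?case
      proof (cases "t \<in> {t1<..<t2}")
        case True
        then have "t \<in> {0..T}" using t1T t2T by auto
        then show ?thesis using True by (simp add: indicator_def)
      next
        case False
        then have "t \<notin> {t1..t2}" using elim by auto
        then show ?thesis using False by simp
      qed
    qed
  qed
  with lim_le part1 show ?thesis by simp
qed

end
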